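(* For each fixed positive integer $K$, with $\theta=(K,P)$, $$\frac{C_{\rm K}(\theta)}{p(\theta)}\sim 1+\frac{P}{K^3}\qquad (P\to\infty).$$
   Context: For positive integers $K\le P$, $\theta=(K,P)$: $q(\theta)=\binom{P-K}{K}/\binom{P}{K}$ if $2K\le P$ and $0$ otherwise; $p(\theta)=1-q(\theta)$; $r(\theta)=\binom{P-2K}{K}/\binom{P}{K}$ if $3K\le P$ and $0$ otherwise; $\beta(\theta)=(1-q)^3+q^3-qr$; $C_{\rm K}(\theta)=\beta(\theta)/(1-q(\theta))^2$ is the clustering coefficient $\mathbb{P}[E_{12}\mid E_{13}\cap E_{23}]$ of the random key graph (nodes receive i.i.d. uniform $K$-subsets of $\{1,\dots,P\}$, adjacent iff subsets intersect). Note $p(\theta)$ equals the clustering coefficient $C_{\rm ER}(p(\theta))$ of the Erdős–Rényi graph with edge probability $p(\theta)$. *)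

theory Defs
  imports Complex_Main "HOL-Library.Landau_Symbols"
begin

definition q_rkg :: "nat \<Rightarrow> nat \<Rightarrow> real" where
  "q_rkg K P = (if 2 * K \<le> P then real ((P - K) choose K) / real (P choose K) else 0)"

definition p_rkg :: "nat \<Rightarrow> nat \<Rightarrow> real" where
  "p_rkg K P = 1 - q_rkg K P"

definition r_rkg :: "nat \<Rightarrow> nat \<Rightarrow> real" where
  "r_rkg K P = (if 3 * K \<le> P then real ((P - 2 * K) choose K) / real (P choose K) else 0)"

definition beta_rkg :: "nat \<Rightarrow> nat \<Rightarrow> real" where
  "beta_rkg K P = (1 - q_rkg K P) ^ 3 + q_rkg K P ^ 3 - q_rkg K P * r_rkg K P"

definition C_K :: "nat \<Rightarrow> nat \<Rightarrow> real" where
  "C_K K P = beta_rkg K P / (1 - q_rkg K P) ^ 2"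

end

theory Submission
  imports Defs
begin

lemma prod_diff_bounds:
  fixes x e :: "'i \<Rightarrow> real"
  assumes "finite I" "\<And>i. i \<in> I \<Longrightarrow> 0 \<le> x i \<and> 0 \<le> e i \<and> x i + e i \<le> 1"
  shows "sum e I * prod x I \<le> prod (\<lambda>i. x i + e i) I - prod x I
         \<and> prod (\<lambda>i. x i + e i) I - prod x I \<le> sum e I"
  using assms
proof (induction I rule: finite_induct)
  case empty
  then show ?case by simp
next
  case (insert j I)
  have IH: "sum e I * prod x I \<le> prod (\<lambda>i. x i + e i) I - prod x I"
           "prod (\<lambda>i. x i + e i) I - prod x I \<le> sum e I"
    using insert by auto
  have xj: "0 \<le> x j" "0 \<le> e j" "x j + e j \<le> 1" using insert.prems by auto
  have p0: "0 \<le> prod x I" by (rule prod_nonneg) (use insert.prems in auto)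
  have p1: "prod x I \<le> 1" by (rule prod_le_1) (use insert.prems in force)+
  have q1: "prod (\<lambda>i. x i + e i) I \<le> 1" by (rule prod_le_1) (use insert.prems in force)+
  have pq: "prod x I \<le> prod (\<lambda>i. x i + e i) I"
    by (rule prod_mono) (use insert.prems in force)
  define A where "A = prod x I"
  define B where "B = prod (\<lambda>i. x i + e i) I"
  define S where "S = sum e I"
  have e1: "prod (\<lambda>i. x i + e i) (insert j I) - prod x (insert j I) = x j * (B - A) + e j * B"
    using insert.hyps by (simp add: A_def B_def algebra_simps)
  have e2: "sum e (insert j I) * prod x (insert j I) = S * x j * A + e j * x j * A"
    using insert.hyps by (simp add: A_def S_def algebra_simps)
  have e3: "sum e (insert j I) = S + e j" using insert.hyps by (simp add: S_def)
  have h1: "S * A \<le> B - A" "B - A \<le> S" "0 \<le> A" "A \<le> 1" "B \<le> 1" "A \<le> B"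
    using IH p0 p1 q1 pq by (auto simp: A_def B_def S_def)
  have "S * x j * A + e j * x j * A \<le> x j * (B - A) + e j * B"
  proof -
    have "S * x j * A = x j * (S * A)" by simp
    also have "\<dots> \<le> x j * (B - A)" using h1 xj by (intro mult_left_mono) auto
    finally have a: "S * x j * A \<le> x j * (B - A)" .
    have xa: "x j * A \<le> A" using xj h1 by (simp add: mult_left_le_one_le)
    have "e j * x j * A = e j * (x j * A)" by simp
    also have "\<dots> \<le> e j * A" using xa xj by (intro mult_left_mono) auto
    finally have "e j * x j * A \<le> e j * A" .
    also have "\<dots> \<le> e j * B" using xj h1 by (intro mult_left_mono) auto
    finally show ?thesis using a by linarith
  qed
  moreover have "x j * (B - A) + e j * B \<le> S + e j"
  proof -
    have "x j * (B - A) \<le> B - A" using xj h1 by (simp add: mult_left_le_one_le)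
    moreover have "e j * B \<le> e j" using xj h1 by (simp add: mult_left_le)
    ultimately show ?thesis using h1 by linarith
  qed
  ultimately show ?case using e1 e2 e3 by simp
qed

lemma binom_ratio:
  assumes "m + K \<le> P"
  shows "real ((P - m) choose K) / real (P choose K) = (\<Prod>i<K. 1 - real m / (real P - real i))"
proof -
  have A: "real ((P - m) choose K) = (\<Prod>i<K. real P - real m - real i) / fact K"
    using assms by (simp add: binomial_gbinomial gbinomial_prod_rev atLeast0LessThan of_nat_diff)
  have B: "real (P choose K) = (\<Prod>i<K. real P - real i) / fact K"
    using assms by (simp add: binomial_gbinomial gbinomial_prod_rev atLeast0LessThan)
  have nz: "(\<Prod>i<K. real P - real i) \<noteq> 0" using assms by (auto simp: prod_zero_iff)
  have "real ((P - m) choose K) / real (P choose K)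
        = (\<Prod>i<K. real P - real m - real i) / (\<Prod>i<K. real P - real i)"
    unfolding A B using nz by (simp add: field_simps)
  also have "\<dots> = (\<Prod>i<K. (real P - real m - real i) / (real P - real i))"
    by (simp add: prod_dividef)
  also have "\<dots> = (\<Prod>i<K. 1 - real m / (real P - real i))"
    by (rule prod.cong) (use assms in \<open>auto simp: field_simps\<close>)
  finally show ?thesis .
qed

lemma term_lim:
  "((\<lambda>P::nat. real P / (real P - real i)) \<longlongrightarrow> 1) at_top"
proof -
  have "((\<lambda>P::nat. 1 / (1 - real i / real P)) \<longlongrightarrow> 1 / (1 - 0)) at_top"
    by (intro tendsto_intros lim_const_over_n) auto
  moreover have "eventually (\<lambda>P::nat. 1 / (1 - real i / real P) = real P / (real P - real i)) at_top"
    using eventually_gt_at_top[of i] by eventually_elim (auto simp: field_simps)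
  ultimately show ?thesis by (simp add: tendsto_cong)
qed

theorem corollary2:
  fixes K :: nat
  assumes "K \<ge> 1"
  shows "(\<lambda>P::nat. C_K K P / p_rkg K P) \<sim>[at_top] (\<lambda>P::nat. 1 + real P / real K ^ 3)"
proof -
  define a where "a = (\<lambda>(P::nat) (i::nat). real K / (real P - real i))"
  define s where "s = (\<lambda>P. \<Sum>i<K. a P i)"
  define t where "t = (\<lambda>P. \<Sum>i<K. (a P i)^2)"
  define Q where "Q = (\<lambda>P. q_rkg K P)"
  define R where "R = (\<lambda>P. r_rkg K P)"
  define E where "E = (\<lambda>P. real P * p_rkg K P)"
  define D where "D = (\<lambda>P. real P ^ 2 * (Q P ^ 2 - R P))"
  have Kpos: "real K > 0" using assms by simp
  have aP: "0 < a P i \<and> a P i \<le> 1/2" if "3 * K \<le> P" "i < K" for P i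
  proof -
    have "real P - real i \<ge> 2 * real K" using that by linarith
    then show ?thesis using Kpos unfolding a_def by (auto simp: field_simps)
  qed
  have Qp: "Q P = (\<Prod>i<K. 1 - a P i)" if "3 * K \<le> P" for P
    using that binom_ratio[of K K P] by (simp add: Q_def q_rkg_def a_def)
  have Rp: "R P = (\<Prod>i<K. 1 - 2 * a P i)" if "3 * K \<le> P" for P
    using that binom_ratio[of "2*K" K P] by (simp add: R_def r_rkg_def a_def)
  have bnd1: "s P * Q P \<le> 1 - Q P \<and> 1 - Q P \<le> s P" if P: "3 * K \<le> P" for P
  proof -
    have "sum (a P) {..<K} * prod (\<lambda>i. 1 - a P i) {..<K}
           \<le> prod (\<lambda>i. (1 - a P i) + a P i) {..<K} - prod (\<lambda>i. 1 - a P i) {..<K}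
          \<and> prod (\<lambda>i. (1 - a P i) + a P i) {..<K} - prod (\<lambda>i. 1 - a P i) {..<K} \<le> sum (a P) {..<K}"
      by (rule prod_diff_bounds) (auto dest: aP[OF P])
    then show ?thesis using Qp[OF P] by (simp add: s_def)
  qed
  have bnd2: "1 - R P \<le> 2 * s P" if P: "3 * K \<le> P" for P
  proof -
    have "prod (\<lambda>i. (1 - 2 * a P i) + 2 * a P i) {..<K} - prod (\<lambda>i. 1 - 2 * a P i) {..<K}
           \<le> sum (\<lambda>i. 2 * a P i) {..<K}"
    proof -
      have h: "\<And>i. i \<in> {..<K} \<Longrightarrow> 0 \<le> 1 - 2 * a P i \<and> 0 \<le> 2 * a P i \<and> 1 - 2 * a P i + 2 * a P i \<le> 1"
        using aP[OF P] by fastforce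
      show ?thesis using prod_diff_bounds[of "{..<K}" "\<lambda>i. 1 - 2 * a P i" "\<lambda>i. 2 * a P i", OF _ h] by simp
    qed
    then show ?thesis using Rp[OF P] by (simp add: s_def sum_distrib_left)
  qed
  have bnd3: "t P * R P \<le> Q P ^ 2 - R P \<and> Q P ^ 2 - R P \<le> t P" if P: "3 * K \<le> P" for P
  proof -
    have sq: "Q P ^ 2 = (\<Prod>i<K. (1 - 2 * a P i) + (a P i)^2)"
      unfolding Qp[OF P] power2_eq_square prod.distrib[symmetric]
      by (rule prod.cong) (auto simp: algebra_simps power2_eq_square)
    have h: "\<And>i. i \<in> {..<K} \<Longrightarrow> 0 \<le> 1 - 2 * a P i \<and> 0 \<le> (a P i)^2 \<and> 1 - 2 * a P i + (a P i)^2 \<le> 1"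
    proof -
      fix i assume "i \<in> {..<K}"
      then have "0 < a P i" "a P i \<le> 1/2" using aP[OF P] by auto
      moreover have "(a P i)^2 \<le> 2 * a P i" using calculation
        by (simp add: power2_eq_square)
      ultimately show "0 \<le> 1 - 2 * a P i \<and> 0 \<le> (a P i)^2 \<and> 1 - 2 * a P i + (a P i)^2 \<le> 1" by auto
    qed
    show ?thesis
      using prod_diff_bounds[of "{..<K}" "\<lambda>i. 1 - 2 * a P i" "\<lambda>i. (a P i)^2", OF _ h]
      unfolding sq Rp[OF P] t_def by simp
  qed
  have Ls: "((\<lambda>P. real P * s P) \<longlongrightarrow> real K * real K) at_top"
  proof -
    have "((\<lambda>P::nat. \<Sum>i<K. real K * (real P / (real P - real i))) \<longlongrightarrow> (\<Sum>i<K. real K * 1)) at_top"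
      by (intro tendsto_sum tendsto_mult tendsto_const term_lim)
    moreover have "(\<lambda>P::nat. \<Sum>i<K. real K * (real P / (real P - real i))) = (\<lambda>P. real P * s P)"
      by (auto simp: s_def a_def sum_distrib_left intro!: ext sum.cong)
    ultimately show ?thesis by simp
  qed
  have Lt: "((\<lambda>P. real P ^ 2 * t P) \<longlongrightarrow> real K * real K ^ 2) at_top"
  proof -
    have "((\<lambda>P::nat. \<Sum>i<K. real K ^ 2 * (real P / (real P - real i)) ^ 2) \<longlongrightarrow> (\<Sum>i<K. real K ^ 2 * 1 ^ 2)) at_top"
      by (intro tendsto_sum tendsto_mult tendsto_const tendsto_power term_lim)
    moreover have "(\<lambda>P::nat. \<Sum>i<K. real K ^ 2 * (real P / (real P - real i)) ^ 2) = (\<lambda>P. real P ^ 2 * t P)"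
      by (auto simp: t_def a_def sum_distrib_left power_divide intro!: ext sum.cong)
    ultimately show ?thesis by simp
  qed
  have Ls0: "(s \<longlongrightarrow> 0) at_top"
  proof -
    have "((\<lambda>P. real P * s P * (1 / real P)) \<longlongrightarrow> real K * real K * 0) at_top"
      by (intro tendsto_mult Ls lim_1_over_n)
    moreover have "eventually (\<lambda>P. real P * s P * (1 / real P) = s P) at_top"
      using eventually_gt_at_top[of 0] by eventually_elim auto
    ultimately show ?thesis by (simp add: tendsto_cong)
  qed
  have ev: "eventually (\<lambda>P. 3 * K \<le> P) at_top" by (rule eventually_ge_at_top)
  have LQ: "(Q \<longlongrightarrow> 1) at_top"
  proof (rule tendsto_sandwich[of "\<lambda>P. 1 - s P" _ _ "\<lambda>P. 1"])
    show "eventually (\<lambda>P. 1 - s P \<le> Q P) at_top" using ev by eventually_elim (use bnd1 in force)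
    show "eventually (\<lambda>P. Q P \<le> 1) at_top" using ev
    proof eventually_elim
      case (elim P)
      have "0 \<le> s P * Q P"
        unfolding s_def Qp[OF elim] using aP[OF elim]
        by (intro mult_nonneg_nonneg sum_nonneg prod_nonneg) force+
      then show ?case using bnd1[OF elim] by linarith
    qed
    show "((\<lambda>P. 1 - s P) \<longlongrightarrow> 1) at_top" using tendsto_diff[OF tendsto_const Ls0, of 1] by simp
  qed auto
  have LE: "(E \<longlongrightarrow> real K * real K) at_top"
  proof (rule tendsto_sandwich[of "\<lambda>P. real P * s P * Q P" _ _ "\<lambda>P. real P * s P"])
    show "eventually (\<lambda>P. real P * s P * Q P \<le> E P) at_top" using ev
    proof eventually_elim
      case (elim P) then show ?case using bnd1[OF elim]
        by (simp add: E_def p_rkg_def Q_def mult_left_mono mult.assoc)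
    qed
    show "eventually (\<lambda>P. E P \<le> real P * s P) at_top" using ev
    proof eventually_elim
      case (elim P) then show ?case using bnd1[OF elim]
        by (simp add: E_def p_rkg_def Q_def mult_left_mono)
    qed
    show "((\<lambda>P. real P * s P * Q P) \<longlongrightarrow> real K * real K) at_top"
      using tendsto_mult[OF Ls LQ] by simp
  qed (use Ls in auto)
  have LD: "(D \<longlongrightarrow> real K * real K ^ 2) at_top"
  proof (rule tendsto_sandwich[of "\<lambda>P. real P ^ 2 * t P * (1 - 2 * s P)" _ _ "\<lambda>P. real P ^ 2 * t P"])
    show "eventually (\<lambda>P. real P ^ 2 * t P * (1 - 2 * s P) \<le> D P) at_top" using ev
    proof eventually_elim
      case (elim P)
      have t0: "0 \<le> t P" unfolding t_def by (simp add: sum_nonneg)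
      have "t P * (1 - 2 * s P) \<le> t P * R P" using bnd2[OF elim] t0 by (intro mult_left_mono) auto
      also have "\<dots> \<le> Q P ^ 2 - R P" using bnd3[OF elim] by simp
      finally have "t P * (1 - 2 * s P) \<le> Q P ^ 2 - R P" .
      then have "real P ^ 2 * (t P * (1 - 2 * s P)) \<le> real P ^ 2 * (Q P ^ 2 - R P)"
        by (intro mult_left_mono) auto
      then show ?case by (simp add: D_def mult.assoc)
    qed
    show "eventually (\<lambda>P. D P \<le> real P ^ 2 * t P) at_top" using ev
    proof eventually_elim
      case (elim P) then show ?case using bnd3[OF elim]
        by (simp add: D_def mult_left_mono)
    qed
    show "((\<lambda>P. real P ^ 2 * t P * (1 - 2 * s P)) \<longlongrightarrow> real K * real K ^ 2) at_top"
      using tendsto_mult[OF Lt tendsto_diff[OF tendsto_const tendsto_mult[OF tendsto_const Ls0]], of 1 2]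
      by simp
  qed (use Lt in auto)
  define g where "g = (\<lambda>P::nat. 1 + real P / real K ^ 3)"
  have Lpg: "((\<lambda>P. real P / g P) \<longlongrightarrow> real K ^ 3) at_top"
  proof -
    have "((\<lambda>P::nat. 1 / (1 / real P + 1 / real K ^ 3)) \<longlongrightarrow> 1 / (0 + 1 / real K ^ 3)) at_top"
      by (intro tendsto_intros lim_1_over_n) (use Kpos in auto)
    moreover have "eventually (\<lambda>P. 1 / (1 / real P + 1 / real K ^ 3) = real P / g P) at_top"
      using eventually_gt_at_top[of 0] by eventually_elim (use Kpos in \<open>auto simp: g_def field_simps\<close>)
    ultimately show ?thesis by (simp add: tendsto_cong)
  qed
  have Lg: "((\<lambda>P. 1 / g P) \<longlongrightarrow> 0) at_top"
  proof -
    have l0: "((\<lambda>P. (1 / real P) * (real P / g P)) \<longlongrightarrow> 0 * real K ^ 3) at_top"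
      by (intro tendsto_mult lim_1_over_n Lpg)
    have l1: "((\<lambda>P. (1 / real P) * (real P / g P)) \<longlongrightarrow> 0) at_top"
      using l0 by (simp only: mult_zero_left)
    have "eventually (\<lambda>P. (1 / real P) * (real P / g P) = 1 / g P) at_top"
      using eventually_gt_at_top[of 0] by eventually_elim auto
    from Lim_transform_eventually[OF l1 this] show ?thesis .
  qed
  have Lall: "((\<lambda>P. 1 / g P + Q P * D P / E P ^ 3 * (real P / g P)) \<longlongrightarrow>
      0 + 1 * (real K * real K ^ 2) / (real K * real K) ^ 3 * real K ^ 3) at_top"
    by (intro tendsto_intros Lg LQ LD LE Lpg) (use Kpos in auto)
  have val: "0 + 1 * (real K * real K ^ 2) / (real K * real K) ^ 3 * real K ^ 3 = (1::real)"
    using Kpos by (simp add: field_simps eval_nat_numeral)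
  have eq: "eventually (\<lambda>P. 1 / g P + Q P * D P / E P ^ 3 * (real P / g P)
                  = (C_K K P / p_rkg K P) / g P) at_top"
    using eventually_conj[OF ev eventually_gt_at_top[of 0]]
  proof eventually_elim
    case (elim P)
    then have P: "3 * K \<le> P" and P0: "real P > 0" by auto
    have g0: "g P > 0" using Kpos P0 unfolding g_def by (simp add: add_pos_nonneg)
    have Q0: "Q P > 0" unfolding Qp[OF P] using aP[OF P] by (intro prod_pos) force
    have s0: "s P > 0" unfolding s_def using aP[OF P] assms
      by (intro sum_pos) (auto simp: lessThan_empty_iff)
    have p0: "p_rkg K P > 0" using bnd1[OF P] Q0 s0
      by (simp add: p_rkg_def Q_def) (smt (verit) mult_pos_pos)
    have Cf: "C_K K P / p_rkg K P = 1 + Q P * (Q P ^ 2 - R P) / p_rkg K P ^ 3"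
    proof -
      have alg: "\<And>p q r::real. p \<noteq> 0 \<Longrightarrow> ((p^3 + q^3 - q*r)/p^2)/p = 1 + q*(q^2-r)/p^3"
        by (simp add: field_simps power3_eq_cube power2_eq_square)
      have "1 - q_rkg K P = p_rkg K P" by (simp add: p_rkg_def)
      then show ?thesis using alg[of "p_rkg K P" "Q P" "R P"] p0
        unfolding C_K_def beta_rkg_def Q_def R_def by simp
    qed
    define X where "X = Q P * (Q P ^ 2 - R P) / p_rkg K P ^ 3"
    have h: "Q P * D P / E P ^ 3 = X / real P"
      using P0 p0 by (simp add: X_def D_def E_def field_simps power3_eq_cube power2_eq_square)
    have alg: "\<And>X y G::real. y > 0 \<Longrightarrow> G > 0 \<Longrightarrow> 1 / G + X / y * (y / G) = (1 + X) / G"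
      by (simp add: field_simps)
    show ?case unfolding Cf h X_def[symmetric] using alg[OF P0 g0] .
  qed
  have "((\<lambda>P. (C_K K P / p_rkg K P) / g P) \<longlongrightarrow> 1) at_top"
    using tendsto_cong[OF eq] Lall val by simp
  then show ?thesis unfolding g_def by (rule asymp_equivI')
qed

end
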